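(* Let $p,q\ge 1$ and let $M$ be a real $(p+q)\times(p+q)$ matrix of the form $$M=\begin{pmatrix}A&O\\ H&B\end{pmatrix}\quad\text{or}\quad M=\begin{pmatrix}A&H\\ O&B\end{pmatrix},$$ where $A$ is a $p\times p$ positive definite symmetric matrix, $B$ is a $q\times q$ negative definite symmetric matrix, $O$ is a zero block and $H$ is an arbitrary real matrix of the appropriate size. Then $M^{-1}M^{T}$ is conjugate in $GL(p+q,\mathbb R)$ to a symmetric matrix. Consequently the characteristic polynomial of $M^{-1}M^T$ has only real zeros. *)

theory Defs
  imports Jordan_Normal_Form.Matrix Jordan_Normal_Form.Char_Poly
begin

definition sym_mat :: "real mat \<Rightarrow> nat \<Rightarrow> bool" where
  "sym_mat A n \<longleftrightarrow> A \<in> carrier_mat n n \<and> transpose_mat A = A"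

definition pos_def_mat :: "real mat \<Rightarrow> nat \<Rightarrow> bool" where
  "pos_def_mat A n \<longleftrightarrow> sym_mat A n \<and>
     (\<forall>v \<in> carrier_vec n. v \<noteq> 0\<^sub>v n \<longrightarrow> v \<bullet> (A *\<^sub>v v) > 0)"

definition neg_def_mat :: "real mat \<Rightarrow> nat \<Rightarrow> bool" where
  "neg_def_mat A n \<longleftrightarrow> sym_mat A n \<and>
     (\<forall>v \<in> carrier_vec n. v \<noteq> 0\<^sub>v n \<longrightarrow> v \<bullet> (A *\<^sub>v v) < 0)"

text \<open>The inverse of a square matrix (meaningful when it is invertible).\<close>
definition mat_inv :: "real mat \<Rightarrow> real mat" where
  "mat_inv M = (SOME N. N \<in> carrier_mat (dim_row M) (dim_row M) \<and>
                        M * N = 1\<^sub>m (dim_row M) \<and> N * M = 1\<^sub>m (dim_row M))"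

end

theory Submission
  imports Defs
begin

lemma sym_real_roots:
  assumes S: "sym_mat S n" and z: "poly (map_poly complex_of_real (char_poly S)) z = 0"
  shows "z \<in> \<real>"
proof -
  have Sc: "S \<in> carrier_mat n n" and St: "transpose_mat S = S" using S unfolding sym_mat_def by auto
  have sym: "S $$ (i,j) = S $$ (j,i)" if "i < n" "j < n" for i j
    using arg_cong[OF St, of "\<lambda>X. X $$ (i,j)"] that Sc by auto
  define S' where "S' = map_mat complex_of_real S"
  have S'c: "S' \<in> carrier_mat n n" using Sc unfolding S'_def by auto
  have "char_poly S' = map_poly complex_of_real (char_poly S)"
    unfolding S'_def by (rule of_real_hom.char_poly_hom[OF Sc])
  with z have "eigenvalue S' z" using eigenvalue_root_char_poly[OF S'c] by simp
  then obtain v where v: "v \<in> carrier_vec n" "v \<noteq> 0\<^sub>v n" "S' *\<^sub>v v = z \<cdot>\<^sub>v v"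
    unfolding eigenvalue_def eigenvector_def using S'c by auto
  have ev: "(\<Sum>j<n. complex_of_real (S $$ (i,j)) * v $ j) = z * v $ i" if "i < n" for i
  proof -
    have "(S' *\<^sub>v v) $ i = (z \<cdot>\<^sub>v v) $ i" using v(3) by simp
    thus ?thesis using that v(1) Sc unfolding S'_def
      by (auto simp: scalar_prod_def atLeast0LessThan)
  qed
  define q where "q = (\<Sum>i<n. cnj (v $ i) * (\<Sum>j<n. complex_of_real (S $$ (i,j)) * v $ j))"
  define r where "r = (\<Sum>i<n. cnj (v $ i) * v $ i)"
  have qr: "q = z * r" unfolding q_def r_def using ev
    by (simp add: sum_distrib_left mult_ac)
  have "cnj q = (\<Sum>i<n. \<Sum>j<n. v $ i * complex_of_real (S $$ (i,j)) * cnj (v $ j))"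
    unfolding q_def by (simp add: sum_distrib_left mult_ac)
  also have "\<dots> = (\<Sum>j<n. \<Sum>i<n. v $ i * complex_of_real (S $$ (i,j)) * cnj (v $ j))"
    by (rule sum.swap)
  also have "\<dots> = q" unfolding q_def sum_distrib_left
    by (intro sum.cong refl, auto simp: sym mult_ac)
  finally have "cnj q = q" .
  hence "Im (cnj q) = Im q" by simp
  hence Imq: "Im q = 0" by simp
  have rreal: "r = complex_of_real (\<Sum>i<n. (cmod (v $ i))^2)"
  proof -
    have "r = (\<Sum>i<n. complex_of_real ((cmod (v $ i))^2))"
      unfolding r_def by (rule sum.cong[OF refl], subst complex_norm_square, simp add: mult.commute)
    thus ?thesis by (simp only: of_real_sum)
  qed
  obtain i where i: "i < n" "v $ i \<noteq> 0" using v(1,2) by (metis eq_vecI carrier_vecD index_zero_vec(1,2))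
  have "(\<Sum>i<n. (cmod (v $ i))^2) \<ge> (cmod (v $ i))^2"
    by (rule member_le_sum, insert i, auto)
  moreover have "(cmod (v $ i))^2 > 0" using i by auto
  ultimately have pos: "(\<Sum>i<n. (cmod (v $ i))^2) > 0" by linarith
  have "Im q = Im z * (\<Sum>i<n. (cmod (v $ i))^2)" unfolding qr rreal by simp
  with Imq pos have "Im z = 0" by simp
  thus ?thesis using complex_is_Real_iff by auto
qed

lemma quad_congr:
  fixes P A :: "real mat"
  assumes P: "P \<in> carrier_mat n m" and A: "A \<in> carrier_mat n n" and v: "v \<in> carrier_vec m"
  shows "v \<bullet> ((transpose_mat P * A * P) *\<^sub>v v) = (P *\<^sub>v v) \<bullet> (A *\<^sub>v (P *\<^sub>v v))"
proof -
  have Pt: "transpose_mat P \<in> carrier_mat m n" using P by simp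
  have "(transpose_mat P * A * P) *\<^sub>v v = (transpose_mat P * A) *\<^sub>v (P *\<^sub>v v)"
    by (rule assoc_mult_mat_vec[OF mult_carrier_mat[OF Pt A] P v])
  also have "\<dots> = transpose_mat P *\<^sub>v (A *\<^sub>v (P *\<^sub>v v))"
    by (rule assoc_mult_mat_vec[OF Pt A], insert P v, simp)
  finally have "(transpose_mat P * A * P) *\<^sub>v v = transpose_mat P *\<^sub>v (A *\<^sub>v (P *\<^sub>v v))" .
  hence "v \<bullet> ((transpose_mat P * A * P) *\<^sub>v v) = (transpose_mat P *\<^sub>v (A *\<^sub>v (P *\<^sub>v v))) \<bullet> v"
    using P A v by (simp add: comm_scalar_prod[of v m])
  also have "\<dots> = (A *\<^sub>v (P *\<^sub>v v)) \<bullet> (P *\<^sub>v v)"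
    by (rule transpose_vec_mult_scalar[OF P v], insert P A v, auto)
  also have "\<dots> = (P *\<^sub>v v) \<bullet> (A *\<^sub>v (P *\<^sub>v v))"
    by (rule comm_scalar_prod[of _ n], insert P A v, auto)
  finally show ?thesis .
qed

lemma pd_congr:
  fixes P Q :: "real mat"
  assumes A: "pos_def_mat A n" and P: "P \<in> carrier_mat n m" and Q: "Q \<in> carrier_mat m n"
    and QP: "Q * P = 1\<^sub>m m"
  shows "pos_def_mat (transpose_mat P * A * P) m"
proof -
  have Ac: "A \<in> carrier_mat n n" and At: "transpose_mat A = A"
    and Ap: "\<And>v. v \<in> carrier_vec n \<Longrightarrow> v \<noteq> 0\<^sub>v n \<Longrightarrow> v \<bullet> (A *\<^sub>v v) > 0"
    using A unfolding pos_def_mat_def sym_mat_def by auto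
  have c: "transpose_mat P * A * P \<in> carrier_mat m m" using P Ac by auto
  have Pt: "transpose_mat P \<in> carrier_mat m n" using P by simp
  have "transpose_mat (transpose_mat P * A * P) = transpose_mat P * transpose_mat (transpose_mat P * A)"
    by (rule transpose_mult[OF mult_carrier_mat[OF Pt Ac] P])
  also have "transpose_mat (transpose_mat P * A) = transpose_mat A * P"
    using transpose_mult[OF Pt Ac] by simp
  also have "transpose_mat P * (transpose_mat A * P) = transpose_mat P * transpose_mat A * P"
    using Pt Ac P by (simp add: assoc_mult_mat[OF Pt _ P])
  finally have "transpose_mat (transpose_mat P * A * P) = transpose_mat P * transpose_mat A * P" .
  hence sym: "transpose_mat (transpose_mat P * A * P) = transpose_mat P * A * P" using At by simp
  {
    fix v :: "real vec" assume v: "v \<in> carrier_vec m" "v \<noteq> 0\<^sub>v m"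
    have Pv: "P *\<^sub>v v \<noteq> 0\<^sub>v n"
    proof
      assume "P *\<^sub>v v = 0\<^sub>v n"
      hence "Q *\<^sub>v (P *\<^sub>v v) = 0\<^sub>v m" using Q by (auto intro!: eq_vecI simp: scalar_prod_def)
      moreover have "Q *\<^sub>v (P *\<^sub>v v) = v" using Q P v QP
        by (simp add: assoc_mult_mat_vec[symmetric])
      ultimately show False using v by simp
    qed
    have "v \<bullet> ((transpose_mat P * A * P) *\<^sub>v v) > 0"
      unfolding quad_congr[OF P Ac v(1)] using Ap[OF _ Pv] P v by auto
  }
  thus ?thesis unfolding pos_def_mat_def sym_mat_def using c sym by auto
qed

lemma chol_combine:
  fixes A L Li T Ti :: "real mat"
  assumes A: "A \<in> carrier_mat n n" and L: "L \<in> carrier_mat n n" and Li: "Li \<in> carrier_mat n n"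
    and T: "T \<in> carrier_mat n n" and Ti: "Ti \<in> carrier_mat n n"
    and LLi: "L * Li = 1\<^sub>m n" and LiL: "Li * L = 1\<^sub>m n" and TTi: "T * Ti = 1\<^sub>m n"
    and D: "transpose_mat L * A * L = transpose_mat T * T"
  shows "(T * Li) * (L * Ti) = 1\<^sub>m n" "A = transpose_mat (T * Li) * (T * Li)"
proof -
  have "(T * Li) * (L * Ti) = T * (Li * (L * Ti))"
    using assoc_mult_mat[OF T Li mult_carrier_mat[OF L Ti]] .
  also have "Li * (L * Ti) = (Li * L) * Ti" by (rule assoc_mult_mat[symmetric, OF Li L Ti])
  also have "T * ((Li * L) * Ti) = T * (Li * L) * Ti"
    by (rule assoc_mult_mat[symmetric, OF T mult_carrier_mat[OF Li L] Ti])
  finally have "(T * Li) * (L * Ti) = T * (Li * L) * Ti" .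
  thus "(T * Li) * (L * Ti) = 1\<^sub>m n" using LiL TTi T by simp
  have tr: "transpose_mat Li * transpose_mat L = 1\<^sub>m n"
    using LLi L Li by (metis transpose_mult transpose_one)
  have Tt: "transpose_mat T \<in> carrier_mat n n" "transpose_mat Li \<in> carrier_mat n n"
    "transpose_mat L \<in> carrier_mat n n" using T Li L by auto
  have "transpose_mat (T * Li) * (T * Li) = (transpose_mat Li * transpose_mat T) * (T * Li)"
    using transpose_mult[OF T Li] by simp
  also have "\<dots> = transpose_mat Li * (transpose_mat T * T) * Li"
    using Tt T Li by (simp add: assoc_mult_mat[of _ n n _ n _ n])
  also have "\<dots> = transpose_mat Li * (transpose_mat L * A * L) * Li" unfolding D ..
  also have "\<dots> = (transpose_mat Li * transpose_mat L) * A * (L * Li)"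
    using Tt L Li A by (simp add: assoc_mult_mat[of _ n n _ n _ n])
  also have "\<dots> = A" using tr LLi A by simp
  finally show "A = transpose_mat (T * Li) * (T * Li)" ..
qed


lemma cholesky:
  "pos_def_mat A n \<Longrightarrow> \<exists>P Q. P \<in> carrier_mat n n \<and> Q \<in> carrier_mat n n \<and> P * Q = 1\<^sub>m n \<and> A = transpose_mat P * P"
proof (induct n arbitrary: A)
  case 0
  have "A = transpose_mat (1\<^sub>m 0) * 1\<^sub>m 0" using 0
    by (auto intro!: eq_matI simp: pos_def_mat_def sym_mat_def)
  thus ?case by (intro exI[of _ "1\<^sub>m 0"], auto)
next
  case (Suc m A)
  have Ac: "A \<in> carrier_mat (Suc m) (Suc m)" and At: "transpose_mat A = A"
    and Ap: "\<And>v. v \<in> carrier_vec (Suc m) \<Longrightarrow> v \<noteq> 0\<^sub>v (Suc m) \<Longrightarrow> v \<bullet> (A *\<^sub>v v) > 0"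
    using Suc.prems unfolding pos_def_mat_def sym_mat_def by auto
  define \<alpha> where "\<alpha> = A $$ (0,0)"
  have "unit_vec (Suc m) 0 \<noteq> (0\<^sub>v (Suc m) :: real vec)"
  proof
    assume "unit_vec (Suc m) 0 = (0\<^sub>v (Suc m) :: real vec)"
    from arg_cong[OF this, of "\<lambda>v. v $ 0"] show False by simp
  qed
  from Ap[OF _ this] Ac have apos: "\<alpha> > 0" unfolding \<alpha>_def by simp
  obtain a b c C where sb: "split_block A 1 1 = (a,b,c,C)" by (cases "split_block A 1 1") auto
  have dims: "dim_row A = 1 + m" "dim_col A = 1 + m" using Ac by auto
  note spl = split_block[OF sb dims]
  have ac: "a \<in> carrier_mat 1 1" and bc: "b \<in> carrier_mat 1 m" and cc: "c \<in> carrier_mat m 1"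
    and Cc: "C \<in> carrier_mat m m" and Aeq: "A = four_block_mat a b c C" using spl by auto
  have a_eq: "a = mat 1 1 (\<lambda>_. \<alpha>)" using sb unfolding split_block_def Let_def \<alpha>_def
    by (auto intro!: eq_matI)
  define x where "x = (-(1/\<alpha>)) \<cdot>\<^sub>m b"
  have xc: "x \<in> carrier_mat 1 m" using bc unfolding x_def by auto
  define L where "L = four_block_mat (1\<^sub>m 1) x (0\<^sub>m m 1) (1\<^sub>m m)"
  define Li where "Li = four_block_mat (1\<^sub>m 1) (-x) (0\<^sub>m m 1) (1\<^sub>m m)"
  have Lc: "L \<in> carrier_mat (Suc m) (Suc m)" and Lic: "Li \<in> carrier_mat (Suc m) (Suc m)"
    unfolding L_def Li_def using xc by auto
  have LLi: "L * Li = 1\<^sub>m (Suc m)"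
  proof -
    have z: "- 0\<^sub>m m m = (0\<^sub>m m m :: real mat)" by (auto intro!: eq_matI)
    show ?thesis unfolding L_def Li_def using xc four_block_one_mat[of 1 m]
      by (simp add: mult_four_block_mat[of _ 1 1 _ m _ m _ _ 1 _ m] z)
  qed
  have LiL: "Li * L = 1\<^sub>m (Suc m)" by (rule mat_mult_left_right_inverse[OF Lc Lic LLi])
  define D where "D = transpose_mat L * A * L"
  have Dpd: "pos_def_mat D (Suc m)" unfolding D_def by (rule pd_congr[OF Suc.prems Lc Lic LiL])
  define d3 where "d3 = transpose_mat x * a + c"
  define S where "S = d3 * x + (transpose_mat x * b + C)"
  have d3c: "d3 \<in> carrier_mat m 1" unfolding d3_def using xc ac cc by auto
  have Sc: "S \<in> carrier_mat m m" unfolding S_def using d3c xc bc Cc by auto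
  have Lt: "transpose_mat L = four_block_mat (1\<^sub>m 1) (0\<^sub>m 1 m) (transpose_mat x) (1\<^sub>m m)"
    unfolding L_def using xc by (simp add: transpose_four_block_mat[of _ 1 1 _ m _ m])
  have LtA: "transpose_mat L * A = four_block_mat a b (transpose_mat x * a + c) (transpose_mat x * b + C)"
    unfolding Lt Aeq using xc ac bc cc Cc
    by (simp add: mult_four_block_mat[of _ 1 1 _ m _ m _ _ 1 _ m])
  have ax: "a * x + b = 0\<^sub>m 1 m"
    using xc bc apos unfolding a_eq x_def
    by (auto intro!: eq_matI simp: scalar_prod_def)
  have D_eq0: "D = four_block_mat a (a * x + b) d3 S"
    unfolding D_def LtA unfolding L_def d3_def S_def using xc ac bc cc Cc
    by (simp add: mult_four_block_mat[of _ 1 1 _ m _ m _ _ 1 _ m])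
  have Dc: "D \<in> carrier_mat (Suc m) (Suc m)" and Dt: "transpose_mat D = D"
    and Dp: "\<And>v. v \<in> carrier_vec (Suc m) \<Longrightarrow> v \<noteq> 0\<^sub>v (Suc m) \<Longrightarrow> v \<bullet> (D *\<^sub>v v) > 0"
    using Dpd unfolding pos_def_mat_def sym_mat_def by auto
  have Dsym: "D $$ (i,j) = D $$ (j,i)" if "i < Suc m" "j < Suc m" for i j
    using arg_cong[OF Dt, of "\<lambda>X. X $$ (j,i)"] that Dc by auto
  have "d3 = 0\<^sub>m m 1"
  proof (rule eq_matI)
    fix i j assume ij: "i < dim_row (0\<^sub>m m 1 :: real mat)" "j < dim_col (0\<^sub>m m 1 :: real mat)"
    hence "D $$ (Suc i, 0) = D $$ (0, Suc i)" by (intro Dsym, auto)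
    thus "d3 $$ (i,j) = (0\<^sub>m m 1 :: real mat) $$ (i,j)"
      unfolding D_eq0 ax using ij ac d3c Sc by auto
  qed (insert d3c, auto)
  hence D_eq: "D = four_block_mat a (0\<^sub>m 1 m) (0\<^sub>m m 1) S" using D_eq0 ax by simp
  have St: "transpose_mat S = S"
  proof (rule eq_matI)
    fix i j assume ij: "i < dim_row S" "j < dim_col S"
    hence "D $$ (Suc i, Suc j) = D $$ (Suc j, Suc i)" using Sc by (intro Dsym, auto)
    thus "transpose_mat S $$ (i,j) = S $$ (i,j)" unfolding D_eq using ij ac Sc by auto
  qed (insert Sc, auto)
  have Spd: "pos_def_mat S m" unfolding pos_def_mat_def sym_mat_def
  proof (intro conjI ballI impI Sc St)
    fix w :: "real vec" assume w: "w \<in> carrier_vec m" "w \<noteq> 0\<^sub>v m"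
    define v where "v = 0\<^sub>v 1 @\<^sub>v w"
    have vc: "v \<in> carrier_vec (Suc m)" unfolding v_def
      using append_carrier_vec[OF zero_carrier_vec[of 1] w(1)] by simp
    have "v \<noteq> 0\<^sub>v (Suc m)"
    proof
      assume "v = 0\<^sub>v (Suc m)"
      hence eq: "0\<^sub>v 1 @\<^sub>v w = 0\<^sub>v (Suc m)" unfolding v_def .
      have "w = 0\<^sub>v m"
      proof (rule eq_vecI)
        fix i assume "i < dim_vec (0\<^sub>v m :: real vec)"
        with arg_cong[OF eq, of "\<lambda>u. u $ Suc i"] w show "w $ i = 0\<^sub>v m $ i" by auto
      qed (insert w, auto)
      with w show False by simp
    qed
    from Dp[OF vc this] have "v \<bullet> (D *\<^sub>v v) > 0" .
    moreover have "D *\<^sub>v v = (a *\<^sub>v 0\<^sub>v 1 + 0\<^sub>m 1 m *\<^sub>v w) @\<^sub>v (0\<^sub>m m 1 *\<^sub>v 0\<^sub>v 1 + S *\<^sub>v w)"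
      unfolding D_eq v_def by (rule four_block_mat_mult_vec, insert ac Sc w, auto)
    moreover have "\<dots> = 0\<^sub>v 1 @\<^sub>v (S *\<^sub>v w)" using ac Sc w
      by (auto intro!: eq_vecI simp: scalar_prod_def)
    ultimately have "(0\<^sub>v 1 @\<^sub>v w) \<bullet> (0\<^sub>v 1 @\<^sub>v (S *\<^sub>v w)) > 0" unfolding v_def by simp
    also have "(0\<^sub>v 1 @\<^sub>v w) \<bullet> (0\<^sub>v 1 @\<^sub>v (S *\<^sub>v w)) = 0\<^sub>v 1 \<bullet> 0\<^sub>v 1 + w \<bullet> (S *\<^sub>v w)"
      by (rule scalar_prod_append[of _ 1 _ m], insert w Sc, auto)
    finally show "w \<bullet> (S *\<^sub>v w) > 0" by simp
  qed
  from Suc.hyps[OF Spd] obtain R Ri where Rc: "R \<in> carrier_mat m m" and Ric: "Ri \<in> carrier_mat m m"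
    and RRi: "R * Ri = 1\<^sub>m m" and SR: "S = transpose_mat R * R" by auto
  define r where "r = mat 1 1 (\<lambda>_. sqrt \<alpha>)"
  define ri where "ri = mat 1 1 (\<lambda>_. 1 / sqrt \<alpha>)"
  have rc: "r \<in> carrier_mat 1 1" "ri \<in> carrier_mat 1 1" unfolding r_def ri_def by auto
  define T where "T = four_block_mat r (0\<^sub>m 1 m) (0\<^sub>m m 1) R"
  define Ti where "Ti = four_block_mat ri (0\<^sub>m 1 m) (0\<^sub>m m 1) Ri"
  have Tc: "T \<in> carrier_mat (Suc m) (Suc m)" "Ti \<in> carrier_mat (Suc m) (Suc m)"
    unfolding T_def Ti_def using rc Rc Ric by auto
  have rri: "r * ri = 1\<^sub>m 1" unfolding r_def ri_def using apos
    by (auto intro!: eq_matI simp: scalar_prod_def)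
  have TTi: "T * Ti = 1\<^sub>m (Suc m)" unfolding T_def Ti_def using rc Rc Ric rri RRi four_block_one_mat[of 1 m]
    by (simp add: mult_four_block_mat[of _ 1 1 _ m _ m _ _ 1 _ m])
  have rr: "transpose_mat r * r = a" unfolding r_def a_eq using apos
    by (auto intro!: eq_matI simp: scalar_prod_def)
  have Tt: "transpose_mat T = four_block_mat (transpose_mat r) (0\<^sub>m 1 m) (0\<^sub>m m 1) (transpose_mat R)"
    unfolding T_def using rc Rc by (simp add: transpose_four_block_mat[of _ 1 1 _ m _ m])
  have DT: "transpose_mat L * A * L = transpose_mat T * T"
    unfolding D_def[symmetric] D_eq Tt unfolding T_def using rc Rc
    using ac by (simp add: mult_four_block_mat[of _ 1 1 _ m _ m _ _ 1 _ m] rr SR)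
  note cc = chol_combine[OF Ac Lc Lic Tc LLi LiL TTi DT]
  show ?case
    by (intro exI[of _ "T * Li"] exI[of _ "L * Ti"] conjI cc, insert Tc Lic Lc, auto)
qed

lemma mat_inv_eq:
  fixes M X :: "real mat"
  assumes M: "M \<in> carrier_mat n n" and X: "X \<in> carrier_mat n n" and MX: "M * X = 1\<^sub>m n" and XM: "X * M = 1\<^sub>m n"
  shows "mat_inv M = X"
proof -
  have ex: "\<exists>N. N \<in> carrier_mat (dim_row M) (dim_row M) \<and> M * N = 1\<^sub>m (dim_row M) \<and> N * M = 1\<^sub>m (dim_row M)"
    using M X MX XM by auto
  from someI_ex[OF ex] M
  have Y: "mat_inv M \<in> carrier_mat n n" "mat_inv M * M = 1\<^sub>m n" unfolding mat_inv_def by auto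
  have "mat_inv M = mat_inv M * (M * X)" using MX Y by simp
  also have "\<dots> = (mat_inv M * M) * X" by (rule assoc_mult_mat[symmetric, OF Y(1) M X])
  also have "\<dots> = X" unfolding Y(2) using X by simp
  finally show ?thesis .
qed

lemma symmetrize:
  fixes N P Q G :: "real mat"
  assumes N: "N \<in> carrier_mat n n" and P: "P \<in> carrier_mat n n" and Q: "Q \<in> carrier_mat n n"
    and PQ: "P * Q = 1\<^sub>m n" and QP: "Q * P = 1\<^sub>m n" and G: "G = transpose_mat P * P"
    and GN: "transpose_mat (G * N) = G * N"
  shows "\<exists>S. sym_mat S n \<and> similar_mat N S"
proof -
  define S where "S = P * N * Q"
  have Sc: "S \<in> carrier_mat n n" unfolding S_def using P N Q by auto
  have Pt: "transpose_mat P \<in> carrier_mat n n" "transpose_mat Q \<in> carrier_mat n n" using P Q by auto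
  have tQP: "transpose_mat Q * transpose_mat P = 1\<^sub>m n" using PQ P Q by (metis transpose_mult transpose_one)
  have Gc: "G \<in> carrier_mat n n" unfolding G using P by auto
  have Sdef: "S = transpose_mat Q * (G * N) * Q"
  proof -
    have "transpose_mat Q * (G * N) * Q = (transpose_mat Q * transpose_mat P) * P * N * Q"
      unfolding G using Pt P N Q by (simp add: assoc_mult_mat[of _ n n _ n _ n])
    also have "\<dots> = S" unfolding tQP S_def using P by simp
    finally show ?thesis ..
  qed
  hence "transpose_mat S = transpose_mat Q * transpose_mat (G * N) * Q"
    using Pt Q Gc N
    by (simp add: transpose_mult[of _ n n _ n] assoc_mult_mat[of _ n n _ n _ n])
  hence St: "transpose_mat S = S" unfolding GN using Sdef by simp
  have "N = Q * S * P"
  proof -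
    have "Q * S * P = (Q * P) * N * (Q * P)" unfolding S_def using P N Q
      by (simp add: assoc_mult_mat[of _ n n _ n _ n])
    thus ?thesis using QP N by simp
  qed
  hence "similar_mat N S" by (intro similar_matI[of _ _ Q P n], insert Sc N P Q PQ QP, auto)
  thus ?thesis using Sc St unfolding sym_mat_def by auto
qed

lemma case_abstract1:
  fixes M K G Gi T Ti :: "real mat"
  assumes c: "M \<in> carrier_mat n n" "K \<in> carrier_mat n n" "G \<in> carrier_mat n n" "Gi \<in> carrier_mat n n"
     "T \<in> carrier_mat n n" "Ti \<in> carrier_mat n n"
   and KK: "K * K = 1\<^sub>m n" and GGi: "G * Gi = 1\<^sub>m n" and Gt: "transpose_mat G = G"
   and MKG: "M = K * G" and GT: "G = transpose_mat T * T" and TTi: "T * Ti = 1\<^sub>m n"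
  shows "invertible_mat M \<and> (\<exists>S. sym_mat S n \<and> similar_mat (mat_inv M * transpose_mat M) S)"
proof -
  define X where "X = Gi * K"
  have Xc: "X \<in> carrier_mat n n" unfolding X_def using c by auto
  have "M * X = K * (G * Gi) * K" unfolding MKG X_def using c
    by (simp add: assoc_mult_mat[of _ n n _ n _ n])
  hence MX: "M * X = 1\<^sub>m n" using KK GGi c by simp
  have XM: "X * M = 1\<^sub>m n" by (rule mat_mult_left_right_inverse[OF c(1) Xc MX])
  have inv: "invertible_mat M" unfolding invertible_mat_def inverts_mat_def
    using c(1) Xc MX XM by (intro conjI exI[of _ X], auto simp: square_mat.simps)
  have mi: "mat_inv M = X" by (rule mat_inv_eq[OF c(1) Xc MX XM])
  have TiT: "Ti * T = 1\<^sub>m n" by (rule mat_mult_left_right_inverse[OF c(5,6) TTi])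
  have Kt: "transpose_mat K \<in> carrier_mat n n" using c by auto
  have Mt: "transpose_mat M = G * transpose_mat K" unfolding MKG using c Gt
    by (simp add: transpose_mult[of _ n n _ n])
  define N where "N = mat_inv M * transpose_mat M"
  have N: "N \<in> carrier_mat n n" unfolding N_def mi Mt using Xc c Kt by auto
  have "G * N = (G * Gi) * K * G * transpose_mat K" unfolding N_def mi Mt X_def
    using c Kt by (simp add: assoc_mult_mat[of _ n n _ n _ n])
  hence GN: "G * N = K * G * transpose_mat K" using GGi c by simp
  have "transpose_mat (G * N) = G * N" unfolding GN using c Kt Gt
    by (simp add: transpose_mult[of _ n n _ n] assoc_mult_mat[of _ n n _ n _ n])
  from symmetrize[OF N c(5,6) TTi TiT GT this] inv show ?thesis unfolding N_def by auto
qed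

lemma case_abstract2:
  fixes M K G Gi T Ti :: "real mat"
  assumes c: "M \<in> carrier_mat n n" "K \<in> carrier_mat n n" "G \<in> carrier_mat n n" "Gi \<in> carrier_mat n n"
     "T \<in> carrier_mat n n" "Ti \<in> carrier_mat n n"
   and KK: "K * K = 1\<^sub>m n" and GGi: "G * Gi = 1\<^sub>m n" and Gt: "transpose_mat G = G"
   and MGK: "M = G * K" and GT: "G = transpose_mat T * T" and TTi: "T * Ti = 1\<^sub>m n"
  shows "invertible_mat M \<and> (\<exists>S. sym_mat S n \<and> similar_mat (mat_inv M * transpose_mat M) S)"
proof -
  define X where "X = K * Gi"
  have Xc: "X \<in> carrier_mat n n" unfolding X_def using c by auto
  have GiG: "Gi * G = 1\<^sub>m n" by (rule mat_mult_left_right_inverse[OF c(3,4) GGi])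
  have "M * X = G * (K * K) * Gi" unfolding MGK X_def using c
    by (simp add: assoc_mult_mat[of _ n n _ n _ n])
  hence MX: "M * X = 1\<^sub>m n" using KK GGi c by simp
  have XM: "X * M = 1\<^sub>m n" by (rule mat_mult_left_right_inverse[OF c(1) Xc MX])
  have inv: "invertible_mat M" unfolding invertible_mat_def inverts_mat_def
    using c(1) Xc MX XM by (intro conjI exI[of _ X], auto simp: square_mat.simps)
  have mi: "mat_inv M = X" by (rule mat_inv_eq[OF c(1) Xc MX XM])
  have Kt: "transpose_mat K \<in> carrier_mat n n" using c by auto
  have KtKt: "transpose_mat K * transpose_mat K = 1\<^sub>m n"
    using KK c by (metis transpose_mult transpose_one)
  have Mt: "transpose_mat M = transpose_mat K * G" unfolding MGK using c Gt
    by (simp add: transpose_mult[of _ n n _ n])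
  define N where "N = mat_inv M * transpose_mat M"
  have N: "N \<in> carrier_mat n n" unfolding N_def mi Mt using Xc c Kt by auto
  define G' where "G' = transpose_mat K * G * K"
  have "G' * N = transpose_mat K * G * (K * K) * Gi * transpose_mat K * G" unfolding N_def mi Mt X_def G'_def
    using c Kt by (simp add: assoc_mult_mat[of _ n n _ n _ n])
  also have "\<dots> = transpose_mat K * (G * Gi) * transpose_mat K * G" unfolding KK
    using c Kt by (simp add: assoc_mult_mat[of _ n n _ n _ n])
  also have "\<dots> = (transpose_mat K * transpose_mat K) * G" unfolding GGi
    using c Kt by (simp add: assoc_mult_mat[of _ n n _ n _ n])
  finally have GN: "G' * N = G" using KtKt c by simp
  have TK: "T * K \<in> carrier_mat n n" "K * Ti \<in> carrier_mat n n" using c by auto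
  have TKK: "(T * K) * (K * Ti) = 1\<^sub>m n"
  proof -
    have "(T * K) * (K * Ti) = T * (K * K) * Ti" using c by (simp add: assoc_mult_mat[of _ n n _ n _ n])
    thus ?thesis using KK TTi c by simp
  qed
  have KTi: "(K * Ti) * (T * K) = 1\<^sub>m n" by (rule mat_mult_left_right_inverse[OF TK TKK])
  have G'T: "G' = transpose_mat (T * K) * (T * K)" unfolding G'_def GT
    using c by (simp add: transpose_mult[of _ n n _ n] assoc_mult_mat[of _ n n _ n _ n])
  have "transpose_mat (G' * N) = G' * N" unfolding GN Gt ..
  from symmetrize[OF N TK TKK KTi G'T this] inv show ?thesis unfolding N_def by auto
qed


lemma neg_zero_mat_aux[simp]: "- 0\<^sub>m n m = (0\<^sub>m n m :: 'a::group_add mat)"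
  by (auto intro!: eq_matI)

lemma r_inv_mat_aux[simp]: "(A :: 'a::group_add mat) \<in> carrier_mat n m \<Longrightarrow> A + - A = 0\<^sub>m n m"
  by (auto intro!: eq_matI)

lemma pd_inverse:
  assumes "pos_def_mat A n"
  shows "\<exists>Ai. Ai \<in> carrier_mat n n \<and> A * Ai = 1\<^sub>m n \<and> Ai * A = 1\<^sub>m n"
proof -
  have Ac: "A \<in> carrier_mat n n" using assms unfolding pos_def_mat_def sym_mat_def by auto
  from cholesky[OF assms] obtain P Q where P: "P \<in> carrier_mat n n" and Q: "Q \<in> carrier_mat n n"
    and PQ: "P * Q = 1\<^sub>m n" and AP: "A = transpose_mat P * P" by auto
  have QP: "Q * P = 1\<^sub>m n" by (rule mat_mult_left_right_inverse[OF P Q PQ])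
  have tPQ: "transpose_mat P * transpose_mat Q = 1\<^sub>m n" using QP P Q by (metis transpose_mult transpose_one)
  have Pt: "transpose_mat P \<in> carrier_mat n n" "transpose_mat Q \<in> carrier_mat n n" using P Q by auto
  have "A * (Q * transpose_mat Q) = transpose_mat P * (P * Q) * transpose_mat Q"
    unfolding AP using P Q Pt by (simp add: assoc_mult_mat[of _ n n _ n _ n])
  hence AAi: "A * (Q * transpose_mat Q) = 1\<^sub>m n" using PQ tPQ Pt by simp
  have "(Q * transpose_mat Q) * A = 1\<^sub>m n"
    by (rule mat_mult_left_right_inverse[OF Ac _ AAi], insert Q Pt, auto)
  thus ?thesis using AAi Q Pt by (intro exI[of _ "Q * transpose_mat Q"], auto)
qed

lemma neg_pos: assumes "neg_def_mat B n" shows "pos_def_mat (- B) n"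
  using assms unfolding neg_def_mat_def pos_def_mat_def sym_mat_def
  by (auto simp: transpose_uminus)

theorem proposition4p9:
  fixes p q :: nat and A B H M :: "real mat"
  assumes "p \<ge> 1" and "q \<ge> 1"
    and "pos_def_mat A p" and "neg_def_mat B q"
    and "(H \<in> carrier_mat q p \<and> M = four_block_mat A (0\<^sub>m p q) H B) \<or>
         (H \<in> carrier_mat p q \<and> M = four_block_mat A H (0\<^sub>m q p) B)"
  shows "invertible_mat M \<and>
         (\<exists>S. sym_mat S (p + q) \<and> similar_mat (mat_inv M * transpose_mat M) S) \<and>
         (\<forall>z::complex. poly (map_poly complex_of_real (char_poly (mat_inv M * transpose_mat M))) z = 0
              \<longrightarrow> z \<in> \<real>)"
proof -
  note Apd = assms(3)
  have Bpd: "pos_def_mat (- B) q" by (rule neg_pos[OF assms(4)])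
  define Bn where "Bn = - B"
  have Ac: "A \<in> carrier_mat p p" and At: "transpose_mat A = A"
    using Apd unfolding pos_def_mat_def sym_mat_def by auto
  have Bnc: "Bn \<in> carrier_mat q q" and Bnt: "transpose_mat Bn = Bn"
    using Bpd unfolding Bn_def pos_def_mat_def sym_mat_def by auto
  have Bc: "B \<in> carrier_mat q q" using Bnc unfolding Bn_def by auto
  have BBn: "B = - Bn" unfolding Bn_def by simp
  from pd_inverse[OF Apd] obtain Ai where Aic: "Ai \<in> carrier_mat p p" and AAi: "A * Ai = 1\<^sub>m p"
    and AiA: "Ai * A = 1\<^sub>m p" by auto
  from pd_inverse[OF Bpd[folded Bn_def]] obtain Bni where Bnic: "Bni \<in> carrier_mat q q"
    and BBi: "Bn * Bni = 1\<^sub>m q" by auto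
  from cholesky[OF Apd] obtain PA QA where PA: "PA \<in> carrier_mat p p" and QA: "QA \<in> carrier_mat p p"
    and PQA: "PA * QA = 1\<^sub>m p" and APA: "A = transpose_mat PA * PA" by auto
  from cholesky[OF Bpd[folded Bn_def]] obtain PB QB where PB: "PB \<in> carrier_mat q q" and QB: "QB \<in> carrier_mat q q"
    and PQB: "PB * QB = 1\<^sub>m q" and BPB: "Bn = transpose_mat PB * PB" by auto
  define G where "G = four_block_mat A (0\<^sub>m p q) (0\<^sub>m q p) Bn"
  define Gi where "Gi = four_block_mat Ai (0\<^sub>m p q) (0\<^sub>m q p) Bni"
  define T where "T = four_block_mat PA (0\<^sub>m p q) (0\<^sub>m q p) PB"
  define Ti where "Ti = four_block_mat QA (0\<^sub>m p q) (0\<^sub>m q p) QB"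
  have carr: "G \<in> carrier_mat (p+q) (p+q)" "Gi \<in> carrier_mat (p+q) (p+q)"
    "T \<in> carrier_mat (p+q) (p+q)" "Ti \<in> carrier_mat (p+q) (p+q)"
    unfolding G_def Gi_def T_def Ti_def using Ac Bnc Aic Bnic PA PB QA QB by auto
  have GGi: "G * Gi = 1\<^sub>m (p+q)" unfolding G_def Gi_def using Ac Bnc Aic Bnic AAi BBi
    by (simp add: mult_four_block_mat[of _ p p _ q _ q _ _ p _ q])
  have TTi: "T * Ti = 1\<^sub>m (p+q)" unfolding T_def Ti_def using PA QA PB QB PQA PQB
    by (simp add: mult_four_block_mat[of _ p p _ q _ q _ _ p _ q])
  have Gt: "transpose_mat G = G" unfolding G_def using Ac Bnc At Bnt
    by (simp add: transpose_four_block_mat[of _ p p _ q _ q])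
  have Tt: "transpose_mat T = four_block_mat (transpose_mat PA) (0\<^sub>m p q) (0\<^sub>m q p) (transpose_mat PB)"
    unfolding T_def using PA PB by (simp add: transpose_four_block_mat[of _ p p _ q _ q])
  have GT: "G = transpose_mat T * T" unfolding Tt unfolding T_def G_def using PA PB APA BPB
    by (simp add: mult_four_block_mat[of _ p p _ q _ q _ _ p _ q])
  have main: "invertible_mat M \<and> (\<exists>S. sym_mat S (p + q) \<and> similar_mat (mat_inv M * transpose_mat M) S)"
    using assms(5)
  proof
    assume h0: "H \<in> carrier_mat q p \<and> M = four_block_mat A (0\<^sub>m p q) H B"
    hence Hc: "H \<in> carrier_mat q p" and h: "M = four_block_mat A (0\<^sub>m p q) H B" by auto
    define K where "K = four_block_mat (1\<^sub>m p) (0\<^sub>m p q) (H * Ai) (- 1\<^sub>m q)"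
    have Kc: "K \<in> carrier_mat (p+q) (p+q)" unfolding K_def using Hc h Aic by auto
    have Mc: "M \<in> carrier_mat (p+q) (p+q)" using Hc h Ac Bc by auto
    have KK: "K * K = 1\<^sub>m (p+q)" unfolding K_def using Hc h Aic four_block_one_mat[of p q]
      by (simp add: mult_four_block_mat[of _ p p _ q _ q _ _ p _ q] r_inv_mat_aux[OF mult_carrier_mat[OF Hc Aic]])
    have MKG: "M = K * G" unfolding K_def G_def using Hc h Aic Ac Bnc AiA BBn
      by (simp add: mult_four_block_mat[of _ p p _ q _ q _ _ p _ q])
    show ?thesis by (rule case_abstract1[OF Mc Kc carr KK GGi Gt MKG GT TTi])
  next
    assume h0: "H \<in> carrier_mat p q \<and> M = four_block_mat A H (0\<^sub>m q p) B"
    hence Hc: "H \<in> carrier_mat p q" and h: "M = four_block_mat A H (0\<^sub>m q p) B" by auto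
    define K where "K = four_block_mat (1\<^sub>m p) (Ai * H) (0\<^sub>m q p) (- 1\<^sub>m q)"
    have Kc: "K \<in> carrier_mat (p+q) (p+q)" unfolding K_def using Hc h Aic by auto
    have Mc: "M \<in> carrier_mat (p+q) (p+q)" using Hc h Ac Bc by auto
    have KK: "K * K = 1\<^sub>m (p+q)" unfolding K_def using Hc h Aic four_block_one_mat[of p q]
      by (simp add: mult_four_block_mat[of _ p p _ q _ q _ _ p _ q] r_inv_mat_aux[OF mult_carrier_mat[OF Aic Hc]])
    have AAH: "A * (Ai * H) = H" using assoc_mult_mat[symmetric, OF Ac Aic Hc] AAi Hc by simp
    have MGK: "M = G * K" unfolding K_def G_def using Hc h Aic Ac Bnc AAi BBn AAH
      by (simp add: mult_four_block_mat[of _ p p _ q _ q _ _ p _ q])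
    show ?thesis by (rule case_abstract2[OF Mc Kc carr KK GGi Gt MGK GT TTi])
  qed
  then obtain S where S: "sym_mat S (p+q)" and sim: "similar_mat (mat_inv M * transpose_mat M) S" by auto
  have "char_poly (mat_inv M * transpose_mat M) = char_poly S" by (rule char_poly_similar[OF sim])
  with sym_real_roots[OF S] main show ?thesis by auto
qed

end
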